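(* Let $\mathbb{K}$ be a field of characteristic $0$, let $(\mathcal{P},\cdot,\{\,,\})$ be a Poisson superalgebra over $\mathbb{K}$, and let $xy=x\cdot y+\{x,y\}$ be the associated nonassociative product. Let $y\in\mathcal{P}$ be homogeneous (of degree $0$ or $1$). Define $y^1=y$ and $y^{n}=y\,y^{n-1}$ for $n\ge2$. Then $y^p y^q=y^{p+q}$ for all integers $p,q\ge1$; consequently the subalgebra of $(\mathcal{P},xy)$ generated by $y$ is associative. Moreover, if $y$ is odd, then $y\cdot y=0$ and $y^2=\{y,y\}$.
   Context: A super vector space is a $\mathbb{Z}_2$-graded vector space $\mathcal{P}=\mathcal{P}_0\oplus\mathcal{P}_1$; $|x|\in\{0,1\}$ denotes the degree of a homogeneous element $x$ (odd means degree $1$). A Poisson superalgebra is a super vector space with two even bilinear products $x\cdot y$ and $\{x,y\}$ such that $(\mathcal{P},\cdot)$ is associative and supercommutative ($x\cdot y=(-1)^{|x||y|}y\cdot x$), $(\mathcal{P},\{\,,\})$ is a Lie superalgebra ($\{x,y\}=-(-1)^{|x||y|}\{y,x\}$ and $(-1)^{|z||x|}\{x,\{y,z\}\}+(-1)^{|x||y|}\{y,\{z,x\}\}+(-1)^{|y||z|}\{z,\{x,y\}\}=0$), and the super Leibniz rule $\{x,y\cdot z\}=\{x,y\}\cdot z+(-1)^{|x||y|}y\cdot\{x,z\}$ holds, for homogeneous $x,y,z$. *)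

theory Defs
  imports Main "HOL.Vector_Spaces"
begin

text \<open>Degrees are the naturals 0 and 1.\<close>

definition super_vector_space ::
  "('k::field \<Rightarrow> 'v::ab_group_add \<Rightarrow> 'v) \<Rightarrow> (nat \<Rightarrow> 'v set) \<Rightarrow> bool" where
  "super_vector_space scale G \<longleftrightarrow>
     vector_space scale \<and>
     module.subspace scale (G 0) \<and> module.subspace scale (G 1) \<and>
     G 0 \<inter> G 1 = {0} \<and>
     (\<forall>v. \<exists>a\<in>G 0. \<exists>b\<in>G 1. v = a + b)"

definition bilinear_op ::
  "('k::field \<Rightarrow> 'v::ab_group_add \<Rightarrow> 'v) \<Rightarrow> ('v \<Rightarrow> 'v \<Rightarrow> 'v) \<Rightarrow> bool" where
  "bilinear_op scale f \<longleftrightarrow>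
     (\<forall>x x' y. f (x + x') y = f x y + f x' y) \<and>
     (\<forall>x y y'. f x (y + y') = f x y + f x y') \<and>
     (\<forall>c x y. f (scale c x) y = scale c (f x y)) \<and>
     (\<forall>c x y. f x (scale c y) = scale c (f x y))"

definition even_op :: "(nat \<Rightarrow> 'v set) \<Rightarrow> ('v \<Rightarrow> 'v \<Rightarrow> 'v) \<Rightarrow> bool" where
  "even_op G f \<longleftrightarrow>
     (\<forall>i\<in>{0,1}. \<forall>j\<in>{0,1}. \<forall>x\<in>G i. \<forall>y\<in>G j. f x y \<in> G ((i + j) mod 2))"

definition ssign :: "('k::field \<Rightarrow> 'v \<Rightarrow> 'v) \<Rightarrow> nat \<Rightarrow> nat \<Rightarrow> 'v \<Rightarrow> 'v" where
  "ssign scale i j x = scale ((-1) ^ (i * j)) x"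

definition poisson_superalgebra ::
  "('k::field \<Rightarrow> 'v::ab_group_add \<Rightarrow> 'v) \<Rightarrow> (nat \<Rightarrow> 'v set)
     \<Rightarrow> ('v \<Rightarrow> 'v \<Rightarrow> 'v) \<Rightarrow> ('v \<Rightarrow> 'v \<Rightarrow> 'v) \<Rightarrow> bool" where
  "poisson_superalgebra scale G m br \<longleftrightarrow>
     super_vector_space scale G \<and>
     bilinear_op scale m \<and> bilinear_op scale br \<and>
     even_op G m \<and> even_op G br \<and>
     \<comment> \<open>associativity of the dot product\<close>
     (\<forall>x y z. m (m x y) z = m x (m y z)) \<and>
     \<comment> \<open>supercommutativity\<close>
     (\<forall>i\<in>{0,1}. \<forall>j\<in>{0,1}. \<forall>x\<in>G i. \<forall>y\<in>G j.
        m x y = ssign scale i j (m y x)) \<and>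
     \<comment> \<open>super antisymmetry of the bracket\<close>
     (\<forall>i\<in>{0,1}. \<forall>j\<in>{0,1}. \<forall>x\<in>G i. \<forall>y\<in>G j.
        br x y = - ssign scale i j (br y x)) \<and>
     \<comment> \<open>super Jacobi identity\<close>
     (\<forall>i\<in>{0,1}. \<forall>j\<in>{0,1}. \<forall>k\<in>{0,1}. \<forall>x\<in>G i. \<forall>y\<in>G j. \<forall>z\<in>G k.
        ssign scale k i (br x (br y z)) + ssign scale i j (br y (br z x))
          + ssign scale j k (br z (br x y)) = 0) \<and>
     \<comment> \<open>super Leibniz rule\<close>
     (\<forall>i\<in>{0,1}. \<forall>j\<in>{0,1}. \<forall>x\<in>G i. \<forall>y\<in>G j. \<forall>z.
        br x (m y z) = m (br x y) z + ssign scale i j (m y (br x z)))"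

definition pprod :: "('v::ab_group_add \<Rightarrow> 'v \<Rightarrow> 'v) \<Rightarrow> ('v \<Rightarrow> 'v \<Rightarrow> 'v) \<Rightarrow> 'v \<Rightarrow> 'v \<Rightarrow> 'v" where
  "pprod m br x y = m x y + br x y"

text \<open>Right-nested powers: y^1 = y, y^n = y y^(n-1) for n \<ge> 2.
  The value at 0 is an irrelevant convention (never used).\<close>
fun ppow :: "('v::zero \<Rightarrow> 'v \<Rightarrow> 'v) \<Rightarrow> 'v \<Rightarrow> nat \<Rightarrow> 'v" where
  "ppow f y 0 = 0"
| "ppow f y (Suc 0) = y"
| "ppow f y (Suc (Suc n)) = f y (ppow f y (Suc n))"

inductive_set gen_subalg ::
  "('k::field \<Rightarrow> 'v::ab_group_add \<Rightarrow> 'v) \<Rightarrow> ('v \<Rightarrow> 'v \<Rightarrow> 'v) \<Rightarrow> 'v \<Rightarrow> 'v set"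
  for scale f y where
  gen: "y \<in> gen_subalg scale f y"
| zero: "0 \<in> gen_subalg scale f y"
| add: "a \<in> gen_subalg scale f y \<Longrightarrow> b \<in> gen_subalg scale f y \<Longrightarrow> a + b \<in> gen_subalg scale f y"
| smult: "a \<in> gen_subalg scale f y \<Longrightarrow> scale c a \<in> gen_subalg scale f y"
| mult: "a \<in> gen_subalg scale f y \<Longrightarrow> b \<in> gen_subalg scale f y \<Longrightarrow> f a b \<in> gen_subalg scale f y"

end

theory Submission imports Defs begin

inductive_set spn :: "('k::field \<Rightarrow> 'v::ab_group_add \<Rightarrow> 'v) \<Rightarrow> 'v set \<Rightarrow> 'v set"
  for scale B where
  base: "a \<in> B \<Longrightarrow> a \<in> spn scale B"
| zero: "0 \<in> spn scale B"
| add: "a \<in> spn scale B \<Longrightarrow> b \<in> spn scale B \<Longrightarrow> a + b \<in> spn scale B"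
| smult: "a \<in> spn scale B \<Longrightarrow> scale c a \<in> spn scale B"

locale psa =
  fixes scale :: "'k::field_char_0 \<Rightarrow> 'v::ab_group_add \<Rightarrow> 'v"
    and G :: "nat \<Rightarrow> 'v set"
    and m br :: "'v \<Rightarrow> 'v \<Rightarrow> 'v"
  assumes P: "poisson_superalgebra scale G m br"
begin

lemma VS: "vector_space scale" using P
  by (simp add: poisson_superalgebra_def super_vector_space_def)

lemma s1[simp]: "scale 1 x = x" using VS vector_space.vector_space_assms(4) by blast
lemma sadd: "scale a (x + y) = scale a x + scale a y" using VS vector_space.vector_space_assms(1) by blast
lemma saddl: "scale (a + b) x = scale a x + scale b x" using VS vector_space.vector_space_assms(2) by blast
lemma smul: "scale a (scale b x) = scale (a*b) x" using VS vector_space.vector_space_assms(3) by blast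
lemma s0[simp]: "scale a 0 = 0" using VS by (metis vector_space.scale_eq_0_iff)
lemma sm1[simp]: "scale (-1) x = - x" using VS
  by (metis add.inverse_unique add.left_inverse s1 saddl s0 vector_space.scale_eq_0_iff)

lemma twice0: "x + x = (0::'v) \<Longrightarrow> x = 0"
proof -
  assume "x + x = 0"
  hence "scale (1/2) (x + x) = 0" by simp
  hence "scale (1/2) x + scale (1/2) x = 0" by (simp add: sadd)
  hence "scale (1/2 + 1/2) x = 0" by (simp only: saddl)
  thus ?thesis by simp
qed

lemma thrice0: "x + x + x = (0::'v) \<Longrightarrow> x = 0"
proof -
  assume "x + x + x = 0"
  hence "scale (1/3) (x + x + x) = 0" by simp
  hence "scale (1/3) x + scale (1/3) x + scale (1/3) x = 0" by (simp add: sadd)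
  hence "scale (1/3 + 1/3 + 1/3) x = 0" by (simp only: saddl)
  thus ?thesis by simp
qed

lemma MOD: "module scale" using VS by (simp add: module_def vector_space_def)
lemma sub0: "module.subspace scale (G 0)" and sub1: "module.subspace scale (G 1)"
  using P by (auto simp: poisson_superalgebra_def super_vector_space_def)

lemma G0_add: "a \<in> G 0 \<Longrightarrow> b \<in> G 0 \<Longrightarrow> a + b \<in> G 0"
  and G0_scale: "a \<in> G 0 \<Longrightarrow> scale c a \<in> G 0"
  and G0_zero: "0 \<in> G 0"
  using sub0 MOD by (auto simp: module.subspace_def)

lemma bm: "bilinear_op scale m" and bb: "bilinear_op scale br"
  using P by (auto simp: poisson_superalgebra_def)

lemma m_addl: "m (x + x') z = m x z + m x' z" and m_addr: "m x (z + z') = m x z + m x z'"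
  and m_sl: "m (scale c x) z = scale c (m x z)" and m_sr: "m x (scale c z) = scale c (m x z)"
  using bm by (auto simp: bilinear_op_def)
lemma b_addl: "br (x + x') z = br x z + br x' z" and b_addr: "br x (z + z') = br x z + br x z'"
  and b_sl: "br (scale c x) z = scale c (br x z)" and b_sr: "br x (scale c z) = scale c (br x z)"
  using bb by (auto simp: bilinear_op_def)

lemma m0l[simp]: "m 0 z = 0" by (metis add_cancel_right_right add_0 m_addl)
lemma m0r[simp]: "m z 0 = 0" by (metis add_cancel_right_right add_0 m_addr)
lemma b0l[simp]: "br 0 z = 0" by (metis add_cancel_right_right add_0 b_addl)
lemma b0r[simp]: "br z 0 = 0" by (metis add_cancel_right_right add_0 b_addr)

lemma evm: "even_op G m" and evb: "even_op G br" using P by (auto simp: poisson_superalgebra_def)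

lemma m00: "a \<in> G 0 \<Longrightarrow> b \<in> G 0 \<Longrightarrow> m a b \<in> G 0"
  and m10: "a \<in> G 1 \<Longrightarrow> b \<in> G 0 \<Longrightarrow> m a b \<in> G 1"
  and m01: "a \<in> G 0 \<Longrightarrow> b \<in> G 1 \<Longrightarrow> m a b \<in> G 1"
  and b00: "a \<in> G 0 \<Longrightarrow> b \<in> G 0 \<Longrightarrow> br a b \<in> G 0"
  and b11: "a \<in> G 1 \<Longrightarrow> b \<in> G 1 \<Longrightarrow> br a b \<in> G 0"
  using evm evb unfolding even_op_def by force+

lemma massoc: "m (m x y) z = m x (m y z)" using P by (simp add: poisson_superalgebra_def)

lemma comm_raw: "i \<in> {0,1} \<Longrightarrow> j \<in> {0,1} \<Longrightarrow> x \<in> G i \<Longrightarrow> y \<in> G j \<Longrightarrow> m x y = ssign scale i j (m y x)"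
  using P unfolding poisson_superalgebra_def by blast
lemma anti_raw: "i \<in> {0,1} \<Longrightarrow> j \<in> {0,1} \<Longrightarrow> x \<in> G i \<Longrightarrow> y \<in> G j \<Longrightarrow> br x y = - ssign scale i j (br y x)"
  using P unfolding poisson_superalgebra_def by blast
lemma jac_raw: "i \<in> {0,1} \<Longrightarrow> j \<in> {0,1} \<Longrightarrow> k \<in> {0,1} \<Longrightarrow> x \<in> G i \<Longrightarrow> y \<in> G j \<Longrightarrow> z \<in> G k \<Longrightarrow>
        ssign scale k i (br x (br y z)) + ssign scale i j (br y (br z x))
          + ssign scale j k (br z (br x y)) = 0"
  using P unfolding poisson_superalgebra_def by blast
lemma leib_raw: "i \<in> {0,1} \<Longrightarrow> j \<in> {0,1} \<Longrightarrow> x \<in> G i \<Longrightarrow> y \<in> G j \<Longrightarrow>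
        br x (m y z) = m (br x y) z + ssign scale i j (m y (br x z))"
  using P unfolding poisson_superalgebra_def by blast

lemma ss0[simp]: "ssign scale 0 j x = x" "ssign scale i 0 x = x" "ssign scale 1 1 x = - x" "ssign scale (Suc 0) (Suc 0) x = - x"
  by (simp_all add: ssign_def)

lemma comm0: "x \<in> G 0 \<Longrightarrow> y \<in> G 0 \<or> y \<in> G 1 \<Longrightarrow> m x y = m y x"
  using comm_raw[of 0 0 x y] comm_raw[of 0 1 x y] by auto
lemma anti0: "x \<in> G 0 \<Longrightarrow> y \<in> G 0 \<or> y \<in> G 1 \<Longrightarrow> br x y = - br y x"
  using anti_raw[of 0 0 x y] anti_raw[of 0 1 x y] by auto
lemma anti0': "y \<in> G 0 \<Longrightarrow> x \<in> G 0 \<or> x \<in> G 1 \<Longrightarrow> br x y = - br y x"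
  using anti_raw[of 0 0 x y] anti_raw[of 1 0 x y] by auto
lemma comm11: "x \<in> G 1 \<Longrightarrow> y \<in> G 1 \<Longrightarrow> m x y = - m y x"
  using comm_raw[of 1 1 x y] by auto
lemma anti11: "x \<in> G 1 \<Longrightarrow> y \<in> G 1 \<Longrightarrow> br x y = br y x"
  using anti_raw[of 1 1 x y] by auto
lemma leib0: "x \<in> G 0 \<Longrightarrow> y \<in> G 0 \<or> y \<in> G 1 \<Longrightarrow> br x (m y z) = m (br x y) z + m y (br x z)"
  using leib_raw[of 0 0 x y z] leib_raw[of 0 1 x y z] by auto
lemma leib10: "x \<in> G 1 \<Longrightarrow> y \<in> G 0 \<Longrightarrow> br x (m y z) = m (br x y) z + m y (br x z)"
  using leib_raw[of 1 0 x y z] by auto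
lemma leib11: "x \<in> G 1 \<Longrightarrow> y \<in> G 1 \<Longrightarrow> br x (m y z) = m (br x y) z - m y (br x z)"
  using leib_raw[of 1 1 x y z] by auto

abbreviation PP where "PP \<equiv> pprod m br"

lemma P_addl: "PP (a + b) c = PP a c + PP b c" by (simp add: pprod_def m_addl b_addl algebra_simps)
lemma P_addr: "PP c (a + b) = PP c a + PP c b" by (simp add: pprod_def m_addr b_addr algebra_simps)
lemma P_sl: "PP (scale k a) c = scale k (PP a c)" by (simp add: pprod_def m_sl b_sl sadd)
lemma P_sr: "PP c (scale k a) = scale k (PP c a)" by (simp add: pprod_def m_sr b_sr sadd)
lemma P_0l[simp]: "PP 0 c = 0" and P_0r[simp]: "PP c 0 = 0" by (simp_all add: pprod_def)

lemma spn_closed: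
  assumes cl: "\<And>a b. a \<in> B \<Longrightarrow> b \<in> B \<Longrightarrow> PP a b \<in> spn scale B"
  shows "a \<in> spn scale B \<Longrightarrow> b \<in> spn scale B \<Longrightarrow> PP a b \<in> spn scale B"
proof (induction a rule: spn.induct)
  case (base a)
  from base.prems show ?case
  proof (induction b rule: spn.induct)
    case (base b) then show ?case using cl \<open>a \<in> B\<close> by blast
  qed (auto simp: P_addr P_sr intro: spn.intros)
qed (auto simp: P_addl P_sl intro: spn.intros)

lemma spn_assoc:
  assumes as: "\<And>a b c. a \<in> B \<Longrightarrow> b \<in> B \<Longrightarrow> c \<in> B \<Longrightarrow> PP (PP a b) c = PP a (PP b c)"
  shows "a \<in> spn scale B \<Longrightarrow> b \<in> spn scale B \<Longrightarrow> c \<in> spn scale B \<Longrightarrow> PP (PP a b) c = PP a (PP b c)"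
proof (induction a rule: spn.induct)
  case (base a)
  from base.prems show ?case
  proof (induction b rule: spn.induct)
    case (base b)
    from base.prems show ?case
    proof (induction c rule: spn.induct)
      case (base c) then show ?case using as \<open>a \<in> B\<close> \<open>b \<in> B\<close> by blast
    qed (auto simp: P_addr P_sr)
  qed (auto simp: P_addl P_addr P_sl P_sr)
qed (auto simp: P_addl P_sl)

lemma gen_spn:
  assumes cl: "\<And>a b. a \<in> B \<Longrightarrow> b \<in> B \<Longrightarrow> PP a b \<in> spn scale B" and yB: "y \<in> B"
  shows "a \<in> gen_subalg scale PP y \<Longrightarrow> a \<in> spn scale B"
  by (induction a rule: gen_subalg.induct) (auto intro: spn.intros spn_closed[OF cl] yB)

end

locale psay = psa +
  fixes y assumes hom: "y \<in> G 0 \<or> y \<in> G 1"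
begin

definition "C = {a \<in> G 0. br y a = 0}"
definition "R = {a \<in> G 0. br y a = 0 \<and> (\<forall>c\<in>C. br c a = 0)}"

lemma R_G0: "r \<in> R \<Longrightarrow> r \<in> G 0" and R_y: "r \<in> R \<Longrightarrow> br y r = 0"
  by (auto simp: R_def)
lemma R_y2: "r \<in> R \<Longrightarrow> br r y = 0" using anti0[of r y] hom R_G0 R_y by auto
lemma R_comm: "r \<in> R \<Longrightarrow> s \<in> R \<Longrightarrow> br r s = 0" by (auto simp: R_def C_def)
lemma R_m: assumes "r \<in> R" "s \<in> R" shows "m r s \<in> R"
proof -
  have r0: "r \<in> G 0" and s0: "s \<in> G 0" using assms R_G0 by auto
  have "br y (m r s) = m (br y r) s + m r (br y s)"
    using hom leib0[of y r s] leib10[of y r s] r0 by auto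
  hence 1: "br y (m r s) = 0" using assms R_y by simp
  have "\<forall>c\<in>C. br c (m r s) = 0"
  proof
    fix c assume c: "c \<in> C"
    hence "br c (m r s) = m (br c r) s + m r (br c s)" using leib0[of c r s] r0 by (auto simp: C_def)
    thus "br c (m r s) = 0" using c assms by (auto simp: R_def)
  qed
  thus ?thesis using 1 m00[OF r0 s0] by (auto simp: R_def)
qed
lemma R_add: "r \<in> R \<Longrightarrow> s \<in> R \<Longrightarrow> r + s \<in> R"
  by (auto simp: R_def b_addr G0_add)
lemma R_scale: "r \<in> R \<Longrightarrow> scale k r \<in> R"
  by (auto simp: R_def b_sr G0_scale)
lemma R_zero: "0 \<in> R" by (auto simp: R_def G0_zero)

lemma R_PP: "r \<in> R \<Longrightarrow> s \<in> R \<Longrightarrow> PP r s = m r s"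
  by (simp add: pprod_def R_comm)

lemma even_case: assumes ev: "y \<in> G 0"
  shows "a \<in> gen_subalg scale PP y \<Longrightarrow> b \<in> gen_subalg scale PP y \<Longrightarrow> c \<in> gen_subalg scale PP y
     \<Longrightarrow> PP (PP a b) c = PP a (PP b c)"
proof -
  have "br y y = - br y y" using anti0[of y y] ev by auto
  hence "br y y + br y y = 0" by (metis add.right_inverse)
  hence yy: "br y y = 0" by (rule twice0)
  have "\<forall>c\<in>C. br c y = 0"
  proof
    fix c assume "c \<in> C"
    hence "c \<in> G 0" "br y c = 0" by (auto simp: C_def)
    thus "br c y = 0" using anti0[of c y] ev by simp
  qed
  hence yR: "y \<in> R" using ev yy by (auto simp: R_def)
  have cl: "\<And>a b. a \<in> R \<Longrightarrow> b \<in> R \<Longrightarrow> PP a b \<in> spn scale R"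
    by (simp add: R_PP R_m spn.base)
  have as: "\<And>a b c. a \<in> R \<Longrightarrow> b \<in> R \<Longrightarrow> c \<in> R \<Longrightarrow> PP (PP a b) c = PP a (PP b c)"
    by (simp add: R_PP R_m massoc)
  show "a \<in> gen_subalg scale PP y \<Longrightarrow> b \<in> gen_subalg scale PP y \<Longrightarrow> c \<in> gen_subalg scale PP y
     \<Longrightarrow> PP (PP a b) c = PP a (PP b c)"
    using spn_assoc[OF as] gen_spn[OF cl yR] by blast
qed

context assumes odd: "y \<in> G 1"
begin

lemma myy: "m y y = 0"
proof -
  have "m y y + m y y = 0" using comm11[OF odd odd] by (metis add.right_inverse)
  thus ?thesis by (rule twice0)
qed
lemma w0: "br y y \<in> G 0" using b11 odd by blast
lemma yw: "br y (br y y) = 0"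
proof -
  have "- br y (br y y) + - br y (br y y) + - br y (br y y) = 0"
    using jac_raw[of 1 1 1 y y y] odd by simp
  hence "- br y (br y y) = 0" by (rule thrice0)
  thus ?thesis by simp
qed
lemma wR: "br y y \<in> R"
proof -
  have "\<forall>c\<in>C. br c (br y y) = 0"
  proof
    fix c assume c: "c \<in> C"
    hence c0: "c \<in> G 0" and yc: "br y c = 0" by (auto simp: C_def)
    have cy: "br c y = 0" using anti0[of c y] c0 odd yc by auto
    show "br c (br y y) = 0" using jac_raw[of 0 1 1 c y y] c0 odd yc cy by simp
  qed
  thus ?thesis using w0 yw by (auto simp: R_def)
qed
lemma yR1: "s \<in> R \<Longrightarrow> m y s \<in> G 1" using m10 odd R_G0 by blast

lemma mRy: "r \<in> R \<Longrightarrow> m r y = m y r" using comm0 R_G0 odd by blast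
lemma mRR: "r \<in> R \<Longrightarrow> s \<in> R \<Longrightarrow> m r s = m s r" using comm0 R_G0 by blast
lemma mRR2: "r \<in> R \<Longrightarrow> s \<in> R \<Longrightarrow> m r (m s t) = m s (m r t)"
  using massoc[of r s t] massoc[of s r t] mRR[of r s] by simp
lemma mRy2: "r \<in> R \<Longrightarrow> m r (m y t) = m y (m r t)"
  using massoc[of r y t] massoc[of y r t] mRy[of r] by simp
lemma myy2: "m y (m y t) = 0" using massoc[of y y t] myy by simp

lemma bRys: "r \<in> R \<Longrightarrow> s \<in> R \<Longrightarrow> br r (m y s) = 0"
  using leib0[of r y s] R_G0 odd R_y2 R_comm by auto
lemma bysR: "r \<in> R \<Longrightarrow> s \<in> R \<Longrightarrow> br (m y s) r = 0"
  using anti0'[of r "m y s"] R_G0 yR1 bRys by auto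
lemma byys: "s \<in> R \<Longrightarrow> br y (m y s) = m (br y y) s"
  using leib11[of y y s] odd R_y by auto
lemma bysy: "s \<in> R \<Longrightarrow> br (m y s) y = m (br y y) s"
  using anti11[of "m y s" y] odd yR1 byys by auto
lemma bysys: "s \<in> R \<Longrightarrow> t \<in> R \<Longrightarrow> br (m y s) (m y t) = m (br y y) (m s t)"
  using leib11[of "m y s" y t] odd yR1 bysy bysR massoc[of "br y y" s t] by auto

lemma t1: "r \<in> R \<Longrightarrow> s \<in> R \<Longrightarrow> PP r s = m r s" by (rule R_PP)
lemma t2: "r \<in> R \<Longrightarrow> s \<in> R \<Longrightarrow> PP r (m y s) = m y (m r s)"
  by (simp add: pprod_def bRys mRy2)
lemma t3: "r \<in> R \<Longrightarrow> PP r y = m y r" by (simp add: pprod_def R_y2 mRy)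
lemma t4: "r \<in> R \<Longrightarrow> s \<in> R \<Longrightarrow> PP (m y s) r = m y (m s r)"
  using bysR[of r s] massoc[of y s r] by (simp add: pprod_def)
lemma t5: "r \<in> R \<Longrightarrow> PP y r = m y r" by (simp add: pprod_def R_y)
lemma t6: "PP y y = br y y" by (simp add: pprod_def myy)
lemma t7: "s \<in> R \<Longrightarrow> PP y (m y s) = m (br y y) s" by (simp add: pprod_def myy2 byys)
lemma t8: "s \<in> R \<Longrightarrow> PP (m y s) y = m (br y y) s"
  using bysy[of s] massoc[of y s y] mRy[of s] myy2[of s] by (simp add: pprod_def)
lemma t9: "s \<in> R \<Longrightarrow> t \<in> R \<Longrightarrow> PP (m y s) (m y t) = m (br y y) (m s t)"
proof -
  assume a: "s \<in> R" "t \<in> R"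
  have "m (m y s) (m y t) = m y (m s (m y t))" by (rule massoc)
  also have "\<dots> = 0" using mRy2[of s t] myy2 a by simp
  finally show ?thesis using bysys a by (simp add: pprod_def)
qed

definition "B = R \<union> (\<lambda>s. m y s) ` R \<union> {y}"

lemmas tab = t1 t2 t3 t4 t5 t6 t7 t8 t9 R_m wR

lemma B_cl: "a \<in> B \<Longrightarrow> b \<in> B \<Longrightarrow> PP a b \<in> B"
  unfolding B_def by (auto simp: tab)

lemma B_assoc: "a \<in> B \<Longrightarrow> b \<in> B \<Longrightarrow> c \<in> B \<Longrightarrow> PP (PP a b) c = PP a (PP b c)"
  unfolding B_def by (auto simp: tab massoc mRR mRR2 mRy mRy2 myy2)

lemma odd_assoc: "a \<in> gen_subalg scale PP y \<Longrightarrow> b \<in> gen_subalg scale PP y \<Longrightarrow> c \<in> gen_subalg scale PP y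
     \<Longrightarrow> PP (PP a b) c = PP a (PP b c)"
proof -
  have yB: "y \<in> B" by (simp add: B_def)
  have cl: "\<And>a b. a \<in> B \<Longrightarrow> b \<in> B \<Longrightarrow> PP a b \<in> spn scale B" using B_cl spn.base by blast
  show "a \<in> gen_subalg scale PP y \<Longrightarrow> b \<in> gen_subalg scale PP y \<Longrightarrow> c \<in> gen_subalg scale PP y
     \<Longrightarrow> PP (PP a b) c = PP a (PP b c)"
    using spn_assoc[OF B_assoc] gen_spn[OF cl yB] by blast
qed

end

lemma gen_assoc: "a \<in> gen_subalg scale PP y \<Longrightarrow> b \<in> gen_subalg scale PP y \<Longrightarrow> c \<in> gen_subalg scale PP y
     \<Longrightarrow> PP (PP a b) c = PP a (PP b c)"
  using odd_assoc even_case hom by blast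

lemma ppow_gen: "ppow PP y (Suc n) \<in> gen_subalg scale PP y"
proof (induction n)
  case 0 then show ?case by (simp add: gen_subalg.gen)
next
  case (Suc n) then show ?case by (simp add: gen_subalg.mult gen_subalg.gen)
qed

lemma pow_add: "PP (ppow PP y (Suc p)) (ppow PP y (Suc q)) = ppow PP y (Suc p + Suc q)"
proof (induction p)
  case 0 then show ?case by simp
next
  case (Suc p)
  have "PP (ppow PP y (Suc (Suc p))) (ppow PP y (Suc q)) = PP (PP y (ppow PP y (Suc p))) (ppow PP y (Suc q))" by simp
  also have "\<dots> = PP y (PP (ppow PP y (Suc p)) (ppow PP y (Suc q)))"
    using gen_assoc gen_subalg.gen ppow_gen by blast
  also have "\<dots> = ppow PP y (Suc (Suc p) + Suc q)" using Suc by simp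
  finally show ?case .
qed

end

theorem mainTheorem3:
  fixes scale :: "'k::field_char_0 \<Rightarrow> 'v::ab_group_add \<Rightarrow> 'v"
    and G :: "nat \<Rightarrow> 'v set"
    and m br :: "'v \<Rightarrow> 'v \<Rightarrow> 'v"
    and y :: 'v
  assumes P: "poisson_superalgebra scale G m br"
    and hom: "y \<in> G 0 \<or> y \<in> G 1"
  shows "(\<forall>p q. p \<ge> 1 \<longrightarrow> q \<ge> 1 \<longrightarrow>
            pprod m br (ppow (pprod m br) y p) (ppow (pprod m br) y q)
              = ppow (pprod m br) y (p + q))
       \<and> (\<forall>a\<in>gen_subalg scale (pprod m br) y. \<forall>b\<in>gen_subalg scale (pprod m br) y.
            \<forall>c\<in>gen_subalg scale (pprod m br) y.
            pprod m br (pprod m br a b) c = pprod m br a (pprod m br b c))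
       \<and> (y \<in> G 1 \<longrightarrow> m y y = 0 \<and> ppow (pprod m br) y 2 = br y y)"
proof -
  interpret psay scale G m br y
    unfolding psay_def psay_axioms_def psa_def using P hom by simp
  have 1: "\<forall>p q. p \<ge> 1 \<longrightarrow> q \<ge> 1 \<longrightarrow>
            pprod m br (ppow (pprod m br) y p) (ppow (pprod m br) y q)
              = ppow (pprod m br) y (p + q)"
  proof (intro allI impI)
    fix p q :: nat assume "p \<ge> 1" "q \<ge> 1"
    then obtain p' q' where "p = Suc p'" "q = Suc q'" by (metis Suc_le_D One_nat_def)
    thus "pprod m br (ppow (pprod m br) y p) (ppow (pprod m br) y q) = ppow (pprod m br) y (p + q)"
      using pow_add by simp
  qed
  have 3: "y \<in> G 1 \<longrightarrow> m y y = 0 \<and> ppow (pprod m br) y 2 = br y y"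
    using myy t6 by (simp add: numeral_2_eq_2)
  show ?thesis using 1 3 gen_assoc by blast
qed

end
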